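(* Let $f:\mathbb{R}^\ell\times\mathbb{R}^m\to\mathbb{R}^\ell$ be $C^1$, let $\Lambda$ be a parameter shift with limits $\lambda_\pm$, and let $X$ define a stable path with endpoints $X_\pm$. For $r>0$ let $\{x_n^r\}_{n\in\mathbb{Z}}$ be the unique solution of $x_{n+1}=f(x_n,\Lambda(rn))$ with $\lim_{n\to-\infty}x_n^r=X_-$. Let $Z_1=f(X_-,\Lambda(0))$ and $Z_2=f(Z_1,\lambda_+)$. If $Z_2\in\mathbb{B}(Y_+,\lambda_+)$ for some attracting fixed point $Y_+$ of $f(\cdot,\lambda_+)$, then there exists $r_1>0$ such that for all $r>r_1$, $x_n^r\to Y_+$ as $n\to\infty$.
   Context: A parameter shift is a $C^1$ function $\Lambda:\mathbb{R}\to\mathbb{R}^m$ with $\lim_{s\to\pm\infty}\Lambda(s)=\lambda_\pm$ and $\lim_{s\to\pm\infty}\Lambda'(s)=0$. A stable path is given by $X:\mathbb{R}\to\mathbb{R}^\ell$ such that: $X(s)$ is a fixed point of $f(\cdot,\Lambda(s))$ for every $s$; $\{(s,X(s))\}$ is a connected curve; the limits $X_\pm=\lim_{s\to\pm\infty}X(s)$ exist and are fixed points of $f(\cdot,\lambda_\pm)$; and the spectral radius of $D_xf(X(s),\Lambda(s))$ is $<1$ for all $s\in\mathbb{R}\cup\{\pm\infty\}$ (with $X(\pm\infty)=X_\pm$, $\Lambda(\pm\infty)=\lambda_\pm$). It is known that for each $r>0$ there is a unique solution with $x_n^r\to X_-$ as $n\to-\infty$. For a fixed point $p$ of $f(\cdot,\lambda)$,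 the basin of attraction $\mathbb{B}(p,\lambda)$ is the set of $x\in\mathbb{R}^\ell$ whose iterates under $f(\cdot,\lambda)$ converge to $p$. *)

theory Defs
  imports "HOL-Analysis.Analysis"
begin

text \<open>Complex eigenvalues of a real linear map L on a Euclidean space, i.e. eigenvalues
  of its complexification: mu is an eigenvalue iff there is a nonzero complex vector
  u + i w with L u + i L w = mu (u + i w).\<close>
definition complex_eigenvalue :: "('a::euclidean_space \<Rightarrow> 'a) \<Rightarrow> complex \<Rightarrow> bool" where
  "complex_eigenvalue L \<mu> \<longleftrightarrow>
     (\<exists>u w. (u \<noteq> 0 \<or> w \<noteq> 0) \<and>
        L u = Re \<mu> *\<^sub>R u - Im \<mu> *\<^sub>R w \<and>
        L w = Im \<mu> *\<^sub>R u + Re \<mu> *\<^sub>R w)"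

definition spectral_radius :: "('a::euclidean_space \<Rightarrow> 'a) \<Rightarrow> real" where
  "spectral_radius L = Sup (cmod ` {\<mu>. complex_eigenvalue L \<mu>})"

definition C1_map :: "('a::euclidean_space \<times> 'b::euclidean_space \<Rightarrow> 'a) \<Rightarrow> bool" where
  "C1_map f \<longleftrightarrow> (\<exists>f'. (\<forall>z. (f has_derivative blinfun_apply (f' z)) (at z)) \<and> continuous_on UNIV f')"

definition Dx :: "('a::euclidean_space \<times> 'b::euclidean_space \<Rightarrow> 'a) \<Rightarrow> 'a \<Rightarrow> 'b \<Rightarrow> ('a \<Rightarrow> 'a)" where
  "Dx f x l = (\<lambda>v. frechet_derivative f (at (x, l)) (v, 0))"

definition parameter_shift :: "(real \<Rightarrow> 'b::euclidean_space) \<Rightarrow> 'b \<Rightarrow> 'b \<Rightarrow> bool" where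
  "parameter_shift \<Lambda> lm lp \<longleftrightarrow>
     (\<exists>\<Lambda>'. (\<forall>s. (\<Lambda> has_vector_derivative \<Lambda>' s) (at s)) \<and> continuous_on UNIV \<Lambda>' \<and>
        (\<Lambda>' \<longlongrightarrow> 0) at_bot \<and> (\<Lambda>' \<longlongrightarrow> 0) at_top) \<and>
     (\<Lambda> \<longlongrightarrow> lm) at_bot \<and> (\<Lambda> \<longlongrightarrow> lp) at_top"

definition stable_path ::
  "('a::euclidean_space \<times> 'b::euclidean_space \<Rightarrow> 'a) \<Rightarrow> (real \<Rightarrow> 'b) \<Rightarrow> 'b \<Rightarrow> 'b \<Rightarrow>
   (real \<Rightarrow> 'a) \<Rightarrow> 'a \<Rightarrow> 'a \<Rightarrow> bool" where
  "stable_path f \<Lambda> lm lp X Xm Xp \<longleftrightarrow>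
     (\<forall>s. f (X s, \<Lambda> s) = X s) \<and>
     connected (range (\<lambda>s. (s, X s))) \<and>
     (X \<longlongrightarrow> Xm) at_bot \<and> (X \<longlongrightarrow> Xp) at_top \<and>
     f (Xm, lm) = Xm \<and> f (Xp, lp) = Xp \<and>
     (\<forall>s. spectral_radius (Dx f (X s) (\<Lambda> s)) < 1) \<and>
     spectral_radius (Dx f Xm lm) < 1 \<and> spectral_radius (Dx f Xp lp) < 1"

definition basin :: "('a::euclidean_space \<times> 'b \<Rightarrow> 'a) \<Rightarrow> 'a \<Rightarrow> 'b \<Rightarrow> 'a set" where
  "basin f p l = {x. (\<lambda>n. ((\<lambda>y. f (y, l)) ^^ n) x) \<longlonglongrightarrow> p}"

definition attracting_fixed_point :: "('a::euclidean_space \<times> 'b::euclidean_space \<Rightarrow> 'a) \<Rightarrow> 'a \<Rightarrow> 'b \<Rightarrow> bool" where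
  "attracting_fixed_point f p l \<longleftrightarrow> f (p, l) = p \<and> spectral_radius (Dx f p l) < 1"

end

theory Submission
  imports Defs "Jordan_Normal_Form.Spectral_Radius"
begin

lemma linear_funpow_aux: "linear (L::'a::real_vector \<Rightarrow> 'a) \<Longrightarrow> linear (L ^^ k)"
proof (induction k)
  case 0 then show ?case by (simp add: linear_iff)
next
  case (Suc k) then show ?case unfolding funpow_Suc_right using linear_compose[of L "L ^^ k"] by (simp add: o_def)
qed

lemma basis_list_sum:
  fixes bs :: "'a::euclidean_space list"
  assumes "distinct bs" "set bs = Basis"
  shows "(\<Sum>l<length bs. g (bs ! l)) = (\<Sum>b\<in>Basis. g b)"
proof -
  have "bij_betw ((!) bs) {..<length bs} Basis"
    using assms by (intro bij_betw_nth) auto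
  then show ?thesis by (rule sum.reindex_bij_betw)
qed

lemma basis_list_inner:
  fixes bs :: "'a::euclidean_space list"
  assumes "distinct bs" "set bs = Basis" "i < length bs" "j < length bs"
  shows "inner (bs ! j) (bs ! i) = (if i = j then 1 else 0)"
proof -
  have "bs ! i \<in> Basis" "bs ! j \<in> Basis" using assms nth_mem by blast+
  moreover have "(bs ! j = bs ! i) = (i = j)" using assms nth_eq_iff_index_eq by blast
  ultimately show ?thesis by (simp add: inner_Basis)
qed

lemma basis_list_repr:
  fixes bs :: "'a::euclidean_space list"
  assumes "distinct bs" "set bs = Basis"
  shows "(\<Sum>l<length bs. inner x (bs ! l) *\<^sub>R bs ! l) = x"
  using basis_list_sum[OF assms, of "\<lambda>b. inner x b *\<^sub>R b"] euclidean_representation[of x]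
  by simp

lemma basis_list_coord:
  fixes bs :: "'a::euclidean_space list"
  assumes "distinct bs" "set bs = Basis" "i < length bs"
  shows "inner (\<Sum>l<length bs. c l *\<^sub>R bs ! l) (bs ! i) = c i"
proof -
  have "inner (\<Sum>l<length bs. c l *\<^sub>R bs ! l) (bs ! i) = (\<Sum>l<length bs. c l * inner (bs ! l) (bs ! i))"
    by (simp add: inner_sum_left)
  also have "\<dots> = (\<Sum>l<length bs. if l = i then c l else 0)"
    using basis_list_inner[OF assms(1,2) assms(3)] by (intro sum.cong) auto
  also have "\<dots> = c i" using assms(3) by simp
  finally show ?thesis .
qed

lemma mat_transfer:
  fixes L :: "'a::euclidean_space \<Rightarrow> 'a"
  assumes lin: "linear L" and ev: "\<And>\<mu>. complex_eigenvalue L \<mu> \<Longrightarrow> cmod \<mu> < 1"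
  shows "\<exists>C. \<forall>k x. norm ((L^^k) x) \<le> C * norm x"
proof -
  obtain bs :: "'a list" where bs: "distinct bs" "set bs = Basis"
    using finite_distinct_list[OF finite_Basis] by blast
  define n where "n = length bs"
  define M where "M = Matrix.mat n n (\<lambda>(i,j). complex_of_real (inner (L (bs!j)) (bs!i)))"
  have Mc: "M \<in> carrier_mat n n" by (simp add: M_def)
  have Mij: "M $$ (i,j) = complex_of_real (inner (L (bs!j)) (bs!i))" if "i<n" "j<n" for i j
    using that by (simp add: M_def)
  have linp: "linear (L^^k)" for k by (rule linear_funpow_aux[OF lin])
  have pow: "(M ^\<^sub>m k) $$ (i,j) = complex_of_real (inner ((L^^k) (bs!j)) (bs!i))"
    if "i<n" "j<n" for k i j
    using that
  proof (induction k arbitrary: i j)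
    case 0
    then show ?case using Mc basis_list_inner[OF bs, of i j] by (simp add: n_def)
  next
    case (Suc k)
    have Mk: "M ^\<^sub>m k \<in> carrier_mat n n" using Mc by simp
    have "(M ^\<^sub>m Suc k) $$ (i,j) = (\<Sum>l = 0..<n. (M ^\<^sub>m k) $$ (i,l) * M $$ (l,j))"
      using Suc.prems Mc Mk by (simp add: scalar_prod_def)
    also have "\<dots> = (\<Sum>l<n. complex_of_real (inner (L (bs!j)) (bs!l) * inner ((L^^k) (bs!l)) (bs!i)))"
      using Suc.IH Suc.prems Mij by (simp add: atLeast0LessThan mult.commute)
    also have "\<dots> = complex_of_real (\<Sum>l<n. inner (L (bs!j)) (bs!l) * inner ((L^^k) (bs!l)) (bs!i))"
      by simp
    also have "(\<Sum>l<n. inner (L (bs!j)) (bs!l) * inner ((L^^k) (bs!l)) (bs!i))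
       = inner ((L^^k) (\<Sum>l<n. inner (L (bs!j)) (bs!l) *\<^sub>R bs!l)) (bs!i)"
      using linp[of k] by (simp add: linear_sum linear_scale inner_sum_left)
    also have "(\<Sum>l<n. inner (L (bs!j)) (bs!l) *\<^sub>R bs!l) = L (bs!j)"
      using basis_list_repr[OF bs] n_def by simp
    finally show ?case unfolding funpow_Suc_right o_apply .
  qed
  have eig: "complex_eigenvalue L \<mu>" if ev0: "eigenvalue M \<mu>" for \<mu>
  proof -
    obtain v where v: "v \<in> carrier_vec n" "v \<noteq> 0\<^sub>v n" "M *\<^sub>v v = \<mu> \<cdot>\<^sub>v v"
      using ev0 Mc unfolding eigenvalue_def eigenvector_def by auto
    define u where "u = (\<Sum>l<n. Re (v$l) *\<^sub>R bs!l)"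
    define w where "w = (\<Sum>l<n. Im (v$l) *\<^sub>R bs!l)"
    have uc: "inner u (bs!i) = Re (v$i)" if "i<n" for i
      using basis_list_coord[OF bs, of i] that by (simp add: u_def n_def)
    have wc: "inner w (bs!i) = Im (v$i)" if "i<n" for i
      using basis_list_coord[OF bs, of i] that by (simp add: w_def n_def)
    have Mv: "(\<Sum>l<n. complex_of_real (inner (L (bs!l)) (bs!i)) * v$l) = \<mu> * v$i" if "i<n" for i
    proof -
      have "(M *\<^sub>v v) $ i = (\<Sum>l = 0..<n. M $$ (i,l) * v$l)"
        using that v(1) Mc by (simp add: scalar_prod_def)
      also have "\<dots> = (\<Sum>l<n. complex_of_real (inner (L (bs!l)) (bs!i)) * v$l)"
        using that Mij by (simp add: atLeast0LessThan)
      finally show ?thesis using v(3) that v(1) by simp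
    qed
    have Luc: "inner (L u) (bs!i) = (\<Sum>l<n. Re (v$l) * inner (L (bs!l)) (bs!i))" for i
      by (simp add: u_def linear_sum[OF lin] linear_scale[OF lin] inner_sum_left)
    have Lwc: "inner (L w) (bs!i) = (\<Sum>l<n. Im (v$l) * inner (L (bs!l)) (bs!i))" for i
      by (simp add: w_def linear_sum[OF lin] linear_scale[OF lin] inner_sum_left)
    have re: "(\<Sum>l<n. Re (v$l) * inner (L (bs!l)) (bs!i)) = Re \<mu> * Re (v$i) - Im \<mu> * Im (v$i)"
      if "i<n" for i
      using arg_cong[OF Mv[OF that], of Re] by (simp add: Re_sum mult.commute)
    have im: "(\<Sum>l<n. Im (v$l) * inner (L (bs!l)) (bs!i)) = Im \<mu> * Re (v$i) + Re \<mu> * Im (v$i)"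
      if "i<n" for i
      using arg_cong[OF Mv[OF that], of Im] by (simp add: Im_sum mult.commute)
    have ball: "\<exists>i<n. b = bs!i" if "b \<in> Basis" for b
      using that bs(2) in_set_conv_nth[of b bs] unfolding n_def by (metis)
    have e1: "L u = Re \<mu> *\<^sub>R u - Im \<mu> *\<^sub>R w"
    proof (rule euclidean_eqI)
      fix b :: 'a assume "b \<in> Basis"
      then obtain i where i: "i<n" "b = bs!i" using ball by blast
      show "inner (L u) b = inner (Re \<mu> *\<^sub>R u - Im \<mu> *\<^sub>R w) b"
        using i Luc re uc wc by (simp add: inner_diff_left)
    qed
    have e2: "L w = Im \<mu> *\<^sub>R u + Re \<mu> *\<^sub>R w"
    proof (rule euclidean_eqI)
      fix b :: 'a assume "b \<in> Basis"
      then obtain i where i: "i<n" "b = bs!i" using ball by blast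
      show "inner (L w) b = inner (Im \<mu> *\<^sub>R u + Re \<mu> *\<^sub>R w) b"
        using i Lwc im uc wc by (simp add: inner_add_left)
    qed
    obtain i where i: "i<n" "v$i \<noteq> 0"
      using v(1,2) by (metis carrier_vecD eq_vecI index_zero_vec(1,2))
    have "u \<noteq> 0 \<or> w \<noteq> 0"
    proof (rule ccontr)
      assume "\<not> (u \<noteq> 0 \<or> w \<noteq> 0)"
      then have "Re (v$i) = 0" "Im (v$i) = 0" using uc[OF i(1)] wc[OF i(1)] by auto
      then show False using i(2) complex_eqI by auto
    qed
    then show ?thesis unfolding complex_eigenvalue_def using e1 e2 by blast
  qed
  have npos: "n > 0" using bs by (simp add: n_def distinct_card[symmetric])
  have "Spectral_Radius.spectral_radius M < 1"
  proof -
    obtain \<mu> where "\<mu> \<in> spectrum M" "Spectral_Radius.spectral_radius M = norm \<mu>"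
      using spectral_radius_mem_max(1)[OF Mc npos] by auto
    then show ?thesis using ev eig unfolding spectrum_def by auto
  qed
  then obtain c where c: "\<And>k. norm_bound (M ^\<^sub>m k) c"
    using spectral_radius_jnf_norm_bound_less_1_upper_triangular[OF Mc] by blast
  have cb: "\<bar>inner ((L^^k) (bs!j)) (bs!i)\<bar> \<le> c" if "i<n" "j<n" for k i j
  proof -
    have "M ^\<^sub>m k \<in> carrier_mat n n" using Mc by simp
    then have "norm ((M ^\<^sub>m k) $$ (i,j)) \<le> c" using c[of k] that Mc unfolding norm_bound_def by auto
    then show ?thesis using pow[OF that] by simp
  qed
  have nb: "norm ((L^^k) (bs!j)) \<le> n * c" if "j<n" for k j
  proof -
    have "norm ((L^^k) (bs!j)) \<le> (\<Sum>b\<in>Basis. \<bar>inner ((L^^k) (bs!j)) b\<bar>)" by (rule norm_le_l1)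
    also have "\<dots> = (\<Sum>i<n. \<bar>inner ((L^^k) (bs!j)) (bs!i)\<bar>)"
      using basis_list_sum[OF bs, of "\<lambda>b. \<bar>inner ((L^^k) (bs!j)) b\<bar>"] by (simp add: n_def)
    also have "\<dots> \<le> (\<Sum>i<n. c)" using cb that by (intro sum_mono) auto
    finally show ?thesis by simp
  qed
  show ?thesis
  proof (intro exI allI)
    fix k and x :: 'a
    have "(L^^k) x = (L^^k) (\<Sum>l<n. inner x (bs ! l) *\<^sub>R bs ! l)"
      using basis_list_repr[OF bs] by (simp add: n_def)
    also have "\<dots> = (\<Sum>l<n. inner x (bs ! l) *\<^sub>R (L^^k) (bs ! l))"
      using linp[of k] by (simp add: linear_sum linear_scale)
    finally have eq: "(L^^k) x = (\<Sum>l<n. inner x (bs ! l) *\<^sub>R (L^^k) (bs ! l))" .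
    have "norm ((L^^k) x) \<le> (\<Sum>l<n. norm (inner x (bs ! l) *\<^sub>R (L^^k) (bs ! l)))"
      unfolding eq by (rule norm_sum)
    also have "\<dots> \<le> (\<Sum>l<n. norm x * (n * c))"
    proof (intro sum_mono)
      fix l assume "l \<in> {..<n}"
      then have l: "l < n" by simp
      have "\<bar>inner x (bs!l)\<bar> \<le> norm x"
        using Basis_le_norm[of "bs!l" x] bs l nth_mem[of l bs] by (simp add: n_def)
      moreover have "norm ((L^^k) (bs ! l)) \<le> n * c" using nb l by simp
      ultimately show "norm (inner x (bs ! l) *\<^sub>R (L^^k) (bs ! l)) \<le> norm x * (n * c)"
        by (simp add: mult_mono)
    qed
    also have "\<dots> = (n * n * c) * norm x" by (simp add: algebra_simps)
    finally show "norm ((L^^k) x) \<le> (n * n * c) * norm x" .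
  qed
qed


lemma norm_rot_identity:
  fixes u w :: "'a::real_inner"
  shows "(norm (a *\<^sub>R u - b *\<^sub>R w))\<^sup>2 + (norm (b *\<^sub>R u + a *\<^sub>R w))\<^sup>2
     = (a\<^sup>2 + b\<^sup>2) * ((norm u)\<^sup>2 + (norm w)\<^sup>2)"
proof -
  have c: "inner w u = inner u w" by (rule inner_commute)
  have 1: "inner (a *\<^sub>R u - b *\<^sub>R w) (a *\<^sub>R u - b *\<^sub>R w) = a*a*inner u u - 2*a*b*inner u w + b*b*inner w w"
    by (simp add: inner_diff_left inner_diff_right c algebra_simps)
  have 2: "inner (b *\<^sub>R u + a *\<^sub>R w) (b *\<^sub>R u + a *\<^sub>R w) = b*b*inner u u + 2*a*b*inner u w + a*a*inner w w"
    by (simp add: inner_add_left inner_add_right c algebra_simps)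
  show ?thesis unfolding power2_norm_eq_inner 1 2 by (simp add: algebra_simps power2_eq_square)
qed

lemma eig_bdd:
  fixes L :: "'a::euclidean_space \<Rightarrow> 'a"
  assumes K: "\<And>x. norm (L x) \<le> K * norm x" and ev: "complex_eigenvalue L \<mu>"
  shows "cmod \<mu> \<le> K"
proof -
  obtain u w where uw: "u \<noteq> 0 \<or> w \<noteq> 0" "L u = Re \<mu> *\<^sub>R u - Im \<mu> *\<^sub>R w"
    "L w = Im \<mu> *\<^sub>R u + Re \<mu> *\<^sub>R w"
    using ev unfolding complex_eigenvalue_def by blast
  have K0: "K \<ge> 0"
  proof (rule ccontr)
    assume "\<not> K \<ge> 0"
    then have "K * norm u < 0 \<or> K * norm w < 0" using uw(1) by (auto simp: mult_neg_pos)
    then show False using K[of u] K[of w] norm_ge_zero[of "L u"] norm_ge_zero[of "L w"] by linarith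
  qed
  define S where "S = (norm u)\<^sup>2 + (norm w)\<^sup>2"
  have S: "S > 0" using uw(1) by (auto simp: S_def add_pos_nonneg add_nonneg_pos)
  have "(cmod \<mu>)\<^sup>2 * S = (norm (L u))\<^sup>2 + (norm (L w))\<^sup>2"
    using norm_rot_identity[of "Re \<mu>" u "Im \<mu>" w] uw(2,3) by (simp add: S_def cmod_power2)
  also have "\<dots> \<le> (K * norm u)\<^sup>2 + (K * norm w)\<^sup>2"
    using K[of u] K[of w] by (intro add_mono power_mono) auto
  also have "\<dots> = K\<^sup>2 * S" by (simp add: S_def algebra_simps power_mult_distrib)
  finally have "(cmod \<mu>)\<^sup>2 \<le> K\<^sup>2" using S by simp
  then show ?thesis using K0 by (rule power2_le_imp_le)
qed

lemma spectral_decay: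
  fixes L :: "'a::euclidean_space \<Rightarrow> 'a"
  assumes lin: "linear L" and sr: "Defs.spectral_radius L < 1"
  shows "\<exists>C c. 0 < c \<and> c < 1 \<and> (\<forall>k x. norm ((L^^k) x) \<le> C * c^k * norm x)"
proof -
  define \<rho> where "\<rho> = Defs.spectral_radius L"
  obtain K where K: "\<And>x. norm (L x) \<le> K * norm x"
    using lin linear_conv_bounded_linear bounded_linear.pos_bounded by (metis mult.commute)
  have bdd: "bdd_above (cmod ` {\<mu>. complex_eigenvalue L \<mu>})"
    using eig_bdd[OF K] by (auto intro!: bdd_aboveI)
  have le: "cmod \<mu> \<le> \<rho>" if "complex_eigenvalue L \<mu>" for \<mu>
    unfolding \<rho>_def Defs.spectral_radius_def using that bdd by (auto intro!: cSup_upper)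
  define c where "c = (max \<rho> 0 + 1) / 2"
  have c: "0 < c" "c < 1" "\<rho> < c" using sr by (auto simp: c_def \<rho>_def)
  define L' where "L' = (\<lambda>x. (1/c) *\<^sub>R L x)"
  have lin': "linear L'" unfolding L'_def using lin by (simp add: linear_compose_scale_right)
  have ev': "cmod \<mu> < 1" if ev1: "complex_eigenvalue L' \<mu>" for \<mu>
  proof -
    obtain u w where uw: "u \<noteq> 0 \<or> w \<noteq> 0" "L' u = Re \<mu> *\<^sub>R u - Im \<mu> *\<^sub>R w"
      "L' w = Im \<mu> *\<^sub>R u + Re \<mu> *\<^sub>R w"
      using ev1 unfolding complex_eigenvalue_def by blast
    have "L u = c *\<^sub>R L' u" "L w = c *\<^sub>R L' w" using c by (auto simp: L'_def)
    then have "L u = Re (of_real c * \<mu>) *\<^sub>R u - Im (of_real c * \<mu>) *\<^sub>R w"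
      "L w = Im (of_real c * \<mu>) *\<^sub>R u + Re (of_real c * \<mu>) *\<^sub>R w"
      using uw by (simp_all add: scaleR_diff_right scaleR_add_right)
    then have ce: "complex_eigenvalue L (of_real c * \<mu>)"
      unfolding complex_eigenvalue_def using uw(1) by blast
    then have "c * cmod \<mu> \<le> \<rho>" using le[OF ce] c(1) by (simp add: norm_mult abs_of_pos)
    then have "c * cmod \<mu> < c * 1" using c by linarith
    then show ?thesis using c(1) by (simp add: mult_less_cancel_left_pos)
  qed
  obtain C where C: "\<And>k x. norm ((L'^^k) x) \<le> C * norm x"
    using mat_transfer[OF lin' ev'] by blast
  have pw: "(L'^^k) x = (1/c)^k *\<^sub>R (L^^k) x" for k x
  proof (induction k arbitrary: x)
    case 0 then show ?case by simp
  next
    case (Suc k)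
    have "(L'^^Suc k) x = (L'^^k) (L' x)" unfolding funpow_Suc_right by simp
    also have "\<dots> = (1/c)^k *\<^sub>R (L^^k) ((1/c) *\<^sub>R L x)" using Suc by (simp add: L'_def)
    also have "\<dots> = (1/c)^Suc k *\<^sub>R (L^^k) (L x)"
      using linear_funpow_aux[OF lin, of k] by (simp add: linear_scale)
    also have "(L^^k) (L x) = (L^^Suc k) x" unfolding funpow_Suc_right by simp
    finally show ?case .
  qed
  show ?thesis
  proof (intro exI conjI allI)
    fix k x
    have "norm ((L^^k) x) = c^k * norm ((L'^^k) x)"
      using c by (simp add: pw power_one_over)
    also have "\<dots> \<le> c^k * (C * norm x)" using C c by (intro mult_left_mono) auto
    finally show "norm ((L^^k) x) \<le> C * c^k * norm x" by (simp add: algebra_simps)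
  qed (use c in auto)
qed

lemma adapted_norm:
  fixes L :: "'a::euclidean_space \<Rightarrow> 'a"
  assumes lin: "linear L" and sr: "Defs.spectral_radius L < 1"
  shows "\<exists>N B d. 0 < d \<and> d < 1 \<and> B \<ge> 1 \<and> (\<forall>v. norm v \<le> N v \<and> N v \<le> B * norm v) \<and>
     (\<forall>u v. N (u + v) \<le> N u + N v) \<and> (\<forall>v. N (L v) \<le> d * N v)"
proof -
  obtain C c where c: "0 < c" "c < 1" and C0: "\<And>k x. norm ((L^^k) x) \<le> C * c^k * norm x"
    using spectral_decay[OF lin sr] by blast
  define C' where "C' = max C 1"
  have C: "norm ((L^^k) x) \<le> C' * c^k * norm x" for k x
  proof -
    have "C * c^k * norm x \<le> C' * c^k * norm x"
      unfolding C'_def using c by (intro mult_right_mono) auto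
    then show ?thesis using C0[of k x] by linarith
  qed
  have C'1: "C' \<ge> 1" by (simp add: C'_def)
  define d where "d = (1 + c) / 2"
  have d: "0 < d" "d < 1" "c < d" using c by (auto simp: d_def)
  define q where "q = c / d"
  have q: "0 < q" "q < 1" using c d by (auto simp: q_def)
  have "(\<lambda>n. q ^ n) \<longlonglongrightarrow> 0" using q by (intro LIMSEQ_power_zero) auto
  then have "\<forall>\<^sub>F n in sequentially. q ^ n < 1 / C'"
    using C'1 by (intro order_tendstoD) auto
  then obtain K0 where K0: "q ^ K0 < 1 / C'" by (auto simp: eventually_sequentially)
  define K where "K = Suc K0"
  have qK: "C' * q ^ K \<le> 1"
  proof -
    have "q ^ K \<le> q ^ K0" unfolding K_def using q by (intro power_decreasing) auto
    then have "q ^ K \<le> 1 / C'" using K0 by linarith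
    then show ?thesis using C'1 by (simp add: field_simps)
  qed
  have linp: "linear (L^^j)" for j by (rule linear_funpow_aux[OF lin])
  define N where "N v = (\<Sum>j<K. norm ((L^^j) v) / d^j)" for v
  define B where "B = max 1 (\<Sum>j<K. C' * c^j / d^j)"
  have lower: "norm v \<le> N v" for v
  proof -
    have "N v = norm v + (\<Sum>j<K0. norm ((L^^Suc j) v) / d^Suc j)"
      unfolding N_def K_def by (subst sum.lessThan_Suc_shift) simp
    moreover have "(\<Sum>j<K0. norm ((L^^Suc j) v) / d^Suc j) \<ge> 0"
      using d by (intro sum_nonneg) auto
    ultimately show ?thesis by linarith
  qed
  have upper: "N v \<le> B * norm v" for v
  proof -
    have "N v \<le> (\<Sum>j<K. C' * c^j / d^j * norm v)"
      unfolding N_def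
    proof (intro sum_mono)
      fix j assume "j \<in> {..<K}"
      have "norm ((L^^j) v) / d^j \<le> C' * c^j * norm v / d^j"
        using C[of j v] d by (intro divide_right_mono) auto
      then show "norm ((L^^j) v) / d^j \<le> C' * c^j / d^j * norm v" by simp
    qed
    also have "\<dots> = (\<Sum>j<K. C' * c^j / d^j) * norm v" by (simp add: sum_distrib_right)
    also have "\<dots> \<le> B * norm v" unfolding B_def by (intro mult_right_mono) auto
    finally show ?thesis .
  qed
  have sub: "N (u + v) \<le> N u + N v" for u v
  proof -
    have "N (u + v) \<le> (\<Sum>j<K. norm ((L^^j) u) / d^j + norm ((L^^j) v) / d^j)"
      unfolding N_def
    proof (intro sum_mono)
      fix j assume "j \<in> {..<K}"
      have "norm ((L^^j) (u + v)) \<le> norm ((L^^j) u) + norm ((L^^j) v)"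
        using linp[of j] by (simp add: linear_add norm_triangle_ineq)
      then show "norm ((L^^j) (u + v)) / d^j \<le> norm ((L^^j) u) / d^j + norm ((L^^j) v) / d^j"
        using d by (simp add: add_divide_distrib[symmetric] divide_right_mono)
    qed
    then show ?thesis by (simp add: N_def sum.distrib)
  qed
  have contr: "N (L v) \<le> d * N v" for v
  proof -
    define a where "a j = norm ((L^^j) v) / d^j" for j
    have "N (L v) = (\<Sum>j<K. d * a (Suc j))"
      unfolding N_def a_def
    proof (intro sum.cong refl)
      fix j
      have "(L^^j) (L v) = (L^^Suc j) v" unfolding funpow_Suc_right by simp
      then show "norm ((L^^j) (L v)) / d^j = d * (norm ((L^^Suc j) v) / d^Suc j)"
        using d by simp
    qed
    also have "\<dots> = d * (\<Sum>j<K. a (Suc j))" by (simp add: sum_distrib_left)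
    also have "(\<Sum>j<K. a (Suc j)) = (\<Sum>j<Suc K. a j) - a 0"
      by (subst sum.lessThan_Suc_shift) simp
    also have "\<dots> = N v + a K - a 0" by (simp add: N_def a_def)
    also have "a K \<le> a 0"
    proof -
      have "a K \<le> C' * c^K * norm v / d^K" unfolding a_def using C[of K v] d
        by (intro divide_right_mono) auto
      also have "\<dots> = (C' * q^K) * norm v" using d by (simp add: q_def power_divide)
      also have "\<dots> \<le> norm v" using qK C'1 q by (intro mult_left_le_one_le) auto
      finally show ?thesis by (simp add: a_def)
    qed
    then have "N v + a K - a 0 \<le> N v" by simp
    finally show ?thesis using d(1) by (simp add: mult_left_mono)
  qed
  show ?thesis
    using d lower upper sub contr by (intro exI[of _ N] exI[of _ B] exI[of _ d]) (auto simp: B_def)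
qed

lemma C1_facts:
  fixes f :: "'a::euclidean_space \<times> 'b::euclidean_space \<Rightarrow> 'a"
  assumes "C1_map f"
  obtains f' where "\<And>z. (f has_derivative blinfun_apply (f' z)) (at z)" "continuous_on UNIV f'"
    "\<And>x l. Dx f x l = (\<lambda>v. blinfun_apply (f' (x,l)) (v, 0))"
proof -
  obtain f' where f': "\<And>z. (f has_derivative blinfun_apply (f' z)) (at z)" "continuous_on UNIV f'"
    using assms unfolding C1_map_def by blast
  have "Dx f x l = (\<lambda>v. blinfun_apply (f' (x,l)) (v, 0))" for x l
    unfolding Dx_def using frechet_derivative_at[OF f'(1)[of "(x,l)"]] by simp
  then show ?thesis using f' that by blast
qed

lemma local_contraction:
  fixes f :: "'a::euclidean_space \<times> 'b::euclidean_space \<Rightarrow> 'a"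
  assumes C1: "C1_map f" and sr: "Defs.spectral_radius (Dx f p l0) < 1"
  shows "\<exists>N B d r. 0 < d \<and> d < 1 \<and> B \<ge> 1 \<and> r > 0 \<and> (\<forall>v. norm v \<le> N v \<and> N v \<le> B * norm v) \<and>
     (\<forall>u v. N (u + v) \<le> N u + N v) \<and>
     (\<forall>x y l. norm (x - p) < r \<and> norm (y - p) < r \<and> norm (l - l0) < r \<longrightarrow>
        N (f (x, l) - f (y, l)) \<le> d * N (x - y))"
proof -
  obtain f' where f': "\<And>z. (f has_derivative blinfun_apply (f' z)) (at z)" "continuous_on UNIV f'"
    "\<And>x l. Dx f x l = (\<lambda>v. blinfun_apply (f' (x,l)) (v, 0))"
    using C1_facts[OF C1] by blast
  define L where "L = (\<lambda>v. blinfun_apply (f' (p,l0)) (v, 0))"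
  have blP: "bounded_linear (\<lambda>v::'a. (v, 0::'b))"
    by (intro bounded_linear_Pair bounded_linear_ident bounded_linear_zero)
  have blL: "bounded_linear L" unfolding L_def
    by (rule bounded_linear_compose[OF blinfun.bounded_linear_right[of "f' (p,l0)"] blP])
  then have lin: "linear L" by (simp add: linear_conv_bounded_linear)
  have "Defs.spectral_radius L < 1" using sr f'(3) by (simp add: L_def)
  then obtain N B d0 where nd: "0 < d0" "d0 < 1" "B \<ge> 1" "\<And>v. norm v \<le> N v" "\<And>v. N v \<le> B * norm v"
    "\<And>u v. N (u + v) \<le> N u + N v" "\<And>v. N (L v) \<le> d0 * N v"
    using adapted_norm[OF lin] by blast
  define \<epsilon> where "\<epsilon> = (1 - d0) / (2 * B)"
  have \<epsilon>: "\<epsilon> > 0" using nd by (simp add: \<epsilon>_def)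
  have "isCont f' (p, l0)" using f'(2) continuous_on_eq_continuous_at by blast
  then obtain r0 where r0: "r0 > 0" "\<And>z. dist z (p, l0) < r0 \<Longrightarrow> dist (f' z) (f' (p, l0)) < \<epsilon>"
    using \<epsilon> unfolding continuous_at_eps_delta by blast
  define r where "r = r0 / 2"
  have r: "r > 0" using r0 by (simp add: r_def)
  have main: "N (f (x, l) - f (y, l)) \<le> ((1 + d0) / 2) * N (x - y)"
    if xy: "norm (x - p) < r" "norm (y - p) < r" "norm (l - l0) < r" for x y l
  proof -
    define S where "S = ball p r"
    define h where "h z = f (z, l) - L z" for z
    have der: "(h has_derivative (\<lambda>v. blinfun_apply (f' (z, l)) (v, 0) - L v)) (at z within S)" for z
    proof -
      have "((\<lambda>z. (z, l)) has_derivative (\<lambda>v. (v, 0))) (at z within S)"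
        by (intro has_derivative_Pair has_derivative_ident has_derivative_const)
      from has_derivative_compose[OF this f'(1)]
      have "((\<lambda>z. f (z, l)) has_derivative (\<lambda>v. blinfun_apply (f' (z, l)) (v, 0))) (at z within S)" .
      moreover have "(L has_derivative L) (at z within S)" by (rule bounded_linear_imp_has_derivative[OF blL])
      ultimately show ?thesis unfolding h_def by (rule has_derivative_diff)
    qed
    have bnd: "onorm (\<lambda>v. blinfun_apply (f' (z, l)) (v, 0) - L v) \<le> \<epsilon>" if z: "z \<in> S" for z
    proof (rule onorm_le)
      fix v :: 'a
      have "dist (z, l) (p, l0) \<le> norm (z - p) + norm (l - l0)"
        using norm_Pair_le[of "z - p" "l - l0"] by (simp add: dist_norm)
      also have "\<dots> < r0" using z xy(3) by (simp add: S_def r_def dist_norm norm_minus_commute)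
      finally have "dist (f' (z, l)) (f' (p, l0)) < \<epsilon>" by (rule r0(2))
      then have nf: "norm (f' (z, l) - f' (p, l0)) \<le> \<epsilon>" by (simp add: dist_norm)
      have "norm (blinfun_apply (f' (z, l)) (v, 0) - L v) = norm (blinfun_apply (f' (z, l) - f' (p, l0)) (v, 0))"
        by (simp add: L_def minus_blinfun.rep_eq)
      also have "\<dots> \<le> norm (f' (z, l) - f' (p, l0)) * norm (v, 0::'b)" by (rule norm_blinfun)
      also have "\<dots> \<le> \<epsilon> * norm v" using nf by (simp add: norm_Pair mult_right_mono)
      finally show "norm (blinfun_apply (f' (z, l)) (v, 0) - L v) \<le> \<epsilon> * norm v" .
    qed
    have xS: "x \<in> S" "y \<in> S" using xy by (auto simp: S_def dist_norm norm_minus_commute)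
    have hb: "norm (h x - h y) \<le> \<epsilon> * norm (x - y)"
      by (rule differentiable_bound[OF _ der bnd xS]) (simp add: S_def)
    have eq: "f (x, l) - f (y, l) = L (x - y) + (h x - h y)"
      using linear_diff[OF lin, of x y] by (simp add: h_def)
    have "N (f (x, l) - f (y, l)) \<le> N (L (x - y)) + N (h x - h y)" unfolding eq by (rule nd(6))
    also have "\<dots> \<le> d0 * N (x - y) + B * (\<epsilon> * norm (x - y))"
    proof (intro add_mono nd(7))
      have "N (h x - h y) \<le> B * norm (h x - h y)" by (rule nd(5))
      also have "\<dots> \<le> B * (\<epsilon> * norm (x - y))" using hb nd(3) by (intro mult_left_mono) auto
      finally show "N (h x - h y) \<le> B * (\<epsilon> * norm (x - y))" .
    qed
    also have "B * (\<epsilon> * norm (x - y)) = ((1 - d0) / 2) * norm (x - y)"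
      using nd(3) by (simp add: \<epsilon>_def field_simps)
    also have "\<dots> \<le> ((1 - d0) / 2) * N (x - y)" using nd(2,4) by (intro mult_left_mono) auto
    finally show ?thesis by (simp add: field_simps)
  qed
  show ?thesis
    apply (rule exI[of _ N], rule exI[of _ B], rule exI[of _ "(1 + d0) / 2"], rule exI[of _ r])
    using nd r main by auto
qed


lemma invariance:
  fixes f :: "'a::euclidean_space \<times> 'b::euclidean_space \<Rightarrow> 'a"
  assumes cont: "continuous_on UNIV f" and fp: "f (p, l0) = p"
    and d: "0 < d" "d < 1" and B: "B \<ge> 1"
    and NB: "\<And>v. norm v \<le> N v" "\<And>v. N v \<le> B * norm v"
    and Nsub: "\<And>u v. N (u + v) \<le> N u + N v"
    and contr: "\<And>x y l. norm (x - p) < r \<Longrightarrow> norm (y - p) < r \<Longrightarrow> norm (l - l0) < r \<Longrightarrow>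
        N (f (x, l) - f (y, l)) \<le> d * N (x - y)"
    and \<epsilon>: "0 < \<epsilon>" "\<epsilon> < r"
  shows "\<exists>\<delta>>0. \<delta> \<le> r \<and> (\<forall>x l. N (x - p) \<le> \<epsilon> \<and> norm (l - l0) < \<delta> \<longrightarrow> N (f (x, l) - p) \<le> \<epsilon>)"
proof -
  have "isCont f (p, l0)" using cont continuous_on_eq_continuous_at by blast
  moreover have pos: "(1 - d) * \<epsilon> / B > 0" using d \<epsilon> B by simp
  ultimately obtain \<delta>1 where \<delta>1: "\<delta>1 > 0" "\<And>z. dist z (p, l0) < \<delta>1 \<Longrightarrow> dist (f z) (f (p, l0)) < (1 - d) * \<epsilon> / B"
    unfolding continuous_at_eps_delta by blast
  define \<delta> where "\<delta> = min \<delta>1 r"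
  have "r > 0" using \<epsilon> by simp
  have "N (f (x, l) - p) \<le> \<epsilon>" if x: "N (x - p) \<le> \<epsilon>" and l: "norm (l - l0) < \<delta>" for x l
  proof -
    have "dist (p, l) (p, l0) < \<delta>1" using l by (simp add: dist_Pair_Pair dist_norm \<delta>_def)
    then have "norm (f (p, l) - p) < (1 - d) * \<epsilon> / B" using \<delta>1(2) fp by (simp add: dist_norm)
    then have a: "N (f (p, l) - p) \<le> (1 - d) * \<epsilon>"
      using NB(2)[of "f (p, l) - p"] B by (simp add: field_simps)
    have xr: "norm (x - p) < r" using NB(1)[of "x - p"] x \<epsilon> by linarith
    have b: "N (f (x, l) - f (p, l)) \<le> d * N (x - p)"
      using contr[OF xr] l \<open>r > 0\<close> by (simp add: \<delta>_def)
    have "N (f (x, l) - p) \<le> N (f (x, l) - f (p, l)) + N (f (p, l) - p)"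
      using Nsub[of "f (x, l) - f (p, l)" "f (p, l) - p"] by simp
    also have "\<dots> \<le> d * \<epsilon> + (1 - d) * \<epsilon>"
    proof -
      have "d * N (x - p) \<le> d * \<epsilon>" using x d by (intro mult_left_mono) auto
      then show ?thesis using a b by linarith
    qed
    finally show ?thesis by (simp add: algebra_simps)
  qed
  then show ?thesis using \<delta>1 \<open>r > 0\<close> by (intro exI[of _ \<delta>]) (auto simp: \<delta>_def)
qed

lemma recur_zero:
  fixes e a :: "nat \<Rightarrow> real"
  assumes d: "0 \<le> d" "d < 1" and e: "\<And>n. 0 \<le> e n" "\<And>n. e n \<le> E"
    and rec: "\<And>n. e (Suc n) \<le> d * e n + a n" and a: "a \<longlonglongrightarrow> 0"
  shows "e \<longlonglongrightarrow> 0"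
proof (rule LIMSEQ_I)
  fix \<eta> :: real assume \<eta>: "\<eta> > 0"
  have "(1 - d) * \<eta> / 2 > 0" using d \<eta> by simp
  from LIMSEQ_D[OF a this] obtain m where m: "\<And>n. n \<ge> m \<Longrightarrow> norm (a n) < (1 - d) * \<eta> / 2"
    by auto
  have E: "E \<ge> 0" using e(1)[of 0] e(2)[of 0] by linarith
  have ind: "e (m + k) \<le> d^k * E + \<eta> / 2" for k
  proof (induction k)
    case 0 then show ?case using e(2)[of m] \<eta> by simp
  next
    case (Suc k)
    have "e (m + Suc k) \<le> d * e (m + k) + a (m + k)" using rec[of "m + k"] by simp
    also have "\<dots> \<le> d * (d^k * E + \<eta> / 2) + (1 - d) * \<eta> / 2"
      using Suc m[of "m + k"] d by (intro add_mono mult_left_mono) auto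
    also have "\<dots> = d^Suc k * E + \<eta> / 2" by (simp add: field_simps)
    finally show ?case .
  qed
  have "(\<lambda>k. d^k * E) \<longlonglongrightarrow> 0" using d by (intro tendsto_mult_left_zero LIMSEQ_power_zero) auto
  from LIMSEQ_D[OF this, of "\<eta>/2"] \<eta> obtain k0 where k0: "\<And>k. k \<ge> k0 \<Longrightarrow> norm (d^k * E) < \<eta> / 2"
    by auto
  show "\<exists>no. \<forall>n\<ge>no. norm (e n - 0) < \<eta>"
  proof (intro exI allI impI)
    fix n assume n: "n \<ge> m + k0"
    then have "e n \<le> d^(n - m) * E + \<eta> / 2" using ind[of "n - m"] by simp
    moreover have "d^(n - m) * E < \<eta> / 2" using k0[of "n - m"] n d E by simp
    ultimately show "norm (e n - 0) < \<eta>" using e(1)[of n] by simp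
  qed
qed

lemma forward_conv:
  fixes f :: "'a::euclidean_space \<times> 'b::euclidean_space \<Rightarrow> 'a"
  assumes cont: "continuous_on UNIV f" and fp: "f (p, l0) = p"
    and d: "0 < d" "d < 1" and B: "B \<ge> 1"
    and NB: "\<And>v. norm v \<le> N v" "\<And>v. N v \<le> B * norm v"
    and Nsub: "\<And>u v. N (u + v) \<le> N u + N v"
    and contr: "\<And>x y l. norm (x - p) < r \<Longrightarrow> norm (y - p) < r \<Longrightarrow> norm (l - l0) < r \<Longrightarrow>
        N (f (x, l) - f (y, l)) \<le> d * N (x - y)"
    and \<epsilon>: "0 < \<epsilon>" "\<epsilon> < r"
    and \<delta>: "\<delta> \<le> r" "\<And>x l. N (x - p) \<le> \<epsilon> \<Longrightarrow> norm (l - l0) < \<delta> \<Longrightarrow> N (f (x, l) - p) \<le> \<epsilon>"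
    and y: "\<And>n. y (Suc n) = f (y n, \<mu> n)" and \<mu>: "\<mu> \<longlonglongrightarrow> l0" "\<And>n. norm (\<mu> n - l0) < \<delta>"
    and y0: "N (y 0 - p) \<le> \<epsilon>"
  shows "y \<longlonglongrightarrow> p"
proof -
  have inv: "N (y n - p) \<le> \<epsilon>" for n
  proof (induction n)
    case 0 then show ?case using y0 by simp
  next
    case (Suc n) then show ?case using \<delta>(2)[OF Suc \<mu>(2)[of n]] y[of n] by simp
  qed
  define e where "e n = N (y n - p)" for n
  define a where "a n = B * norm (f (p, \<mu> n) - p)" for n
  have e0: "0 \<le> e n" for n using NB(1)[of "y n - p"] norm_ge_zero[of "y n - p"] unfolding e_def by linarith
  have rec: "e (Suc n) \<le> d * e n + a n" for n
  proof -
    have yr: "norm (y n - p) < r" using NB(1)[of "y n - p"] inv[of n] \<epsilon> by linarith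
    have "e (Suc n) \<le> N (f (y n, \<mu> n) - f (p, \<mu> n)) + N (f (p, \<mu> n) - p)"
      using Nsub[of "f (y n, \<mu> n) - f (p, \<mu> n)" "f (p, \<mu> n) - p"] y[of n] by (simp add: e_def)
    also have "\<dots> \<le> d * e n + a n"
      using contr[OF yr, of p "\<mu> n"] \<mu>(2)[of n] \<delta>(1) \<epsilon> NB(2)[of "f (p, \<mu> n) - p"]
      by (simp add: e_def a_def)
    finally show ?thesis .
  qed
  have "isCont f (p, l0)" using cont continuous_on_eq_continuous_at by blast
  moreover have "((\<lambda>n. (p, \<mu> n)) \<longlonglongrightarrow> (p, l0))" using \<mu>(1) by (intro tendsto_intros)
  ultimately have "(\<lambda>n. f (p, \<mu> n)) \<longlonglongrightarrow> f (p, l0)" by (rule isCont_tendsto_compose)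
  then have "(\<lambda>n. f (p, \<mu> n) - p) \<longlonglongrightarrow> 0" using fp by (simp add: LIM_zero)
  then have "(\<lambda>n. norm (f (p, \<mu> n) - p)) \<longlonglongrightarrow> 0" by (rule tendsto_norm_zero)
  then have a0: "a \<longlonglongrightarrow> 0" unfolding a_def by (rule tendsto_mult_right_zero)
  have eE: "\<And>n. e n \<le> \<epsilon>" using inv by (simp add: e_def)
  have e00: "e \<longlonglongrightarrow> 0" by (rule recur_zero[OF _ d(2) e0 eE rec a0]) (use d(1) in simp)
  have "(\<lambda>n. y n - p) \<longlonglongrightarrow> 0"
  proof (rule Lim_null_comparison[OF _ e00])
    show "\<forall>\<^sub>F n in sequentially. norm (y n - p) \<le> e n"
      by (intro always_eventually allI) (simp add: e_def NB(1))
  qed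
  then show ?thesis by (rule LIM_zero_cancel)
qed

lemma cont2:
  fixes f :: "'a::euclidean_space \<times> 'b::euclidean_space \<Rightarrow> 'a"
  assumes cont: "continuous_on UNIV f" and \<epsilon>: "\<epsilon> > 0"
  shows "\<exists>\<theta>>0. \<forall>x l. norm (x - a) < \<theta> \<and> norm (l - b) < \<theta> \<longrightarrow> norm (f (x, l) - f (a, b)) < \<epsilon>"
proof -
  have "isCont f (a, b)" using cont continuous_on_eq_continuous_at by blast
  then obtain \<delta> where \<delta>: "\<delta> > 0" "\<And>z. dist z (a, b) < \<delta> \<Longrightarrow> dist (f z) (f (a, b)) < \<epsilon>"
    using \<epsilon> unfolding continuous_at_eps_delta by blast
  have "norm (f (x, l) - f (a, b)) < \<epsilon>" if "norm (x - a) < \<delta>/2" "norm (l - b) < \<delta>/2" for x l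
  proof -
    have "dist (x, l) (a, b) \<le> norm (x - a) + norm (l - b)"
      using norm_Pair_le[of "x - a" "l - b"] by (simp add: dist_norm)
    also have "\<dots> < \<delta>" using that by simp
    finally show ?thesis using \<delta>(2) by (simp add: dist_norm)
  qed
  then show ?thesis using \<delta>(1) by (intro exI[of _ "\<delta>/2"]) auto
qed

fun traj :: "('a \<times> 'b \<Rightarrow> 'a) \<Rightarrow> 'a \<Rightarrow> (nat \<Rightarrow> 'b) \<Rightarrow> nat \<Rightarrow> 'a" where
  "traj f x \<mu> 0 = x"
| "traj f x \<mu> (Suc k) = f (traj f x \<mu> k, \<mu> k)"

lemma traj_cont:
  fixes f :: "'a::euclidean_space \<times> 'b::euclidean_space \<Rightarrow> 'a"
  assumes cont: "continuous_on UNIV f"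
  shows "\<epsilon> > 0 \<Longrightarrow> \<exists>\<eta>>0. \<forall>x \<mu>. norm (x - z) < \<eta> \<and> (\<forall>i<K. norm (\<mu> i - l) < \<eta>) \<longrightarrow>
      norm (traj f x \<mu> K - ((\<lambda>y. f (y, l))^^K) z) < \<epsilon>"
proof (induction K arbitrary: \<epsilon>)
  case 0
  then show ?case by (intro exI[of _ \<epsilon>]) auto
next
  case (Suc K)
  define w where "w = ((\<lambda>y. f (y, l))^^K) z"
  obtain \<theta> where \<theta>: "\<theta> > 0" "\<And>x l'. norm (x - w) < \<theta> \<Longrightarrow> norm (l' - l) < \<theta> \<Longrightarrow> norm (f (x, l') - f (w, l)) < \<epsilon>"
    using cont2[OF cont Suc.prems, of w l] by blast
  obtain \<eta>' where \<eta>': "\<eta>' > 0" "\<And>x \<mu>. norm (x - z) < \<eta>' \<Longrightarrow> (\<forall>i<K. norm (\<mu> i - l) < \<eta>') \<Longrightarrow>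
      norm (traj f x \<mu> K - w) < \<theta>"
    using Suc.IH[OF \<theta>(1)] unfolding w_def by blast
  show ?case
  proof (intro exI[of _ "min \<eta>' \<theta>"] conjI allI impI)
    show "min \<eta>' \<theta> > 0" using \<eta>' \<theta> by simp
    fix x \<mu> assume h: "norm (x - z) < min \<eta>' \<theta> \<and> (\<forall>i<Suc K. norm (\<mu> i - l) < min \<eta>' \<theta>)"
    have "norm (traj f x \<mu> K - w) < \<theta>" using h by (intro \<eta>'(2)) auto
    moreover have "norm (\<mu> K - l) < \<theta>" using h by auto
    ultimately have "norm (f (traj f x \<mu> K, \<mu> K) - f (w, l)) < \<epsilon>" by (rule \<theta>(2))
    moreover have "((\<lambda>y. f (y, l))^^Suc K) z = f (w, l)" by (simp add: w_def)
    ultimately show "norm (traj f x \<mu> (Suc K) - ((\<lambda>y. f (y, l))^^Suc K) z) < \<epsilon>" by simp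
  qed
qed

theorem mainTheorem5:
  fixes f :: "'a::euclidean_space \<times> 'b::euclidean_space \<Rightarrow> 'a"
    and \<Lambda> :: "real \<Rightarrow> 'b" and X :: "real \<Rightarrow> 'a"
  assumes "C1_map f"
    and "parameter_shift \<Lambda> lm lp"
    and "stable_path f \<Lambda> lm lp X Xm Xp"
    and "attracting_fixed_point f Yp lp"
    and "f (f (Xm, \<Lambda> 0), lp) \<in> basin f Yp lp"
  shows "\<exists>r1>0. \<forall>r>r1. \<forall>x :: int \<Rightarrow> 'a.
           (\<forall>n. x (n + 1) = f (x n, \<Lambda> (r * of_int n))) \<and> (x \<longlongrightarrow> Xm) at_bot
           \<longrightarrow> (x \<longlongrightarrow> Yp) at_top"
proof -
  obtain f' where f': "\<And>z. (f has_derivative blinfun_apply (f' z)) (at z)"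
    "continuous_on UNIV f'" "\<And>x l. Dx f x l = (\<lambda>v. blinfun_apply (f' (x,l)) (v, 0))"
    using C1_facts[OF assms(1)] by blast
  have cont: "continuous_on UNIV f"
  proof -
    have "isCont f z" for z using has_derivative_continuous[OF f'(1)[of z]] .
    then show ?thesis by (simp add: continuous_at_imp_continuous_on)
  qed
  have \<Lambda>m: "(\<Lambda> \<longlongrightarrow> lm) at_bot" and \<Lambda>p: "(\<Lambda> \<longlongrightarrow> lp) at_top"
    using assms(2) unfolding parameter_shift_def by auto
  have fXm: "f (Xm, lm) = Xm" and srm: "Defs.spectral_radius (Dx f Xm lm) < 1"
    using assms(3) unfolding stable_path_def by auto
  have fYp: "f (Yp, lp) = Yp" and srp: "Defs.spectral_radius (Dx f Yp lp) < 1"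
    using assms(4) unfolding attracting_fixed_point_def by auto
  define g where "g = (\<lambda>y. f (y, lp))"
  define Z1 where "Z1 = f (Xm, \<Lambda> 0)"
  define Z2 where "Z2 = f (Z1, lp)"
  have bas: "(\<lambda>n. (g^^n) Z2) \<longlonglongrightarrow> Yp"
    using assms(5) unfolding basin_def g_def Z2_def Z1_def by simp
  obtain N2 B2 d2 r2 where l2: "0 < d2" "d2 < 1" "B2 \<ge> 1" "r2 > 0"
    "\<And>v. norm v \<le> N2 v" "\<And>v. N2 v \<le> B2 * norm v" "\<And>u v. N2 (u + v) \<le> N2 u + N2 v"
    "\<And>x y l. norm (x - Yp) < r2 \<Longrightarrow> norm (y - Yp) < r2 \<Longrightarrow> norm (l - lp) < r2 \<Longrightarrow>
        N2 (f (x, l) - f (y, l)) \<le> d2 * N2 (x - y)"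
    using local_contraction[OF assms(1) srp] by blast
  define \<epsilon>2 where "\<epsilon>2 = r2 / 2"
  have \<epsilon>2: "0 < \<epsilon>2" "\<epsilon>2 < r2" using l2 by (auto simp: \<epsilon>2_def)
  obtain \<delta>2 where \<delta>2: "\<delta>2 > 0" "\<delta>2 \<le> r2"
    "\<And>x l. N2 (x - Yp) \<le> \<epsilon>2 \<Longrightarrow> norm (l - lp) < \<delta>2 \<Longrightarrow> N2 (f (x, l) - Yp) \<le> \<epsilon>2"
    using invariance[OF cont fYp l2(1,2,3,5,6,7,8) \<epsilon>2] by blast
  have q2: "\<epsilon>2 / (2 * B2) > 0" using \<epsilon>2 l2 by simp
  from LIMSEQ_D[OF bas q2] obtain K where K: "norm ((g^^K) Z2 - Yp) < \<epsilon>2 / (2 * B2)"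
    by auto
  obtain \<eta> where \<eta>: "\<eta> > 0" "\<And>x \<mu>. norm (x - Z2) < \<eta> \<Longrightarrow> (\<forall>i<K. norm (\<mu> i - lp) < \<eta>) \<Longrightarrow>
      norm (traj f x \<mu> K - (g^^K) Z2) < \<epsilon>2 / (2 * B2)"
    using traj_cont[OF cont q2, of Z2 K lp] unfolding g_def by blast
  obtain \<theta>1 where \<theta>1: "\<theta>1 > 0" "\<And>x l. norm (x - Z1) < \<theta>1 \<Longrightarrow> norm (l - lp) < \<theta>1 \<Longrightarrow> norm (f (x, l) - Z2) < \<eta>"
    using cont2[OF cont \<eta>(1), of Z1 lp] unfolding Z2_def by blast
  obtain \<theta>0 where \<theta>0: "\<theta>0 > 0" "\<And>x l. norm (x - Xm) < \<theta>0 \<Longrightarrow> norm (l - \<Lambda> 0) < \<theta>0 \<Longrightarrow> norm (f (x, l) - Z1) < \<theta>1"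
    using cont2[OF cont \<theta>1(1), of Xm "\<Lambda> 0"] unfolding Z1_def by blast
  obtain N1 B1 d1 r1' where l1: "0 < d1" "d1 < 1" "B1 \<ge> 1" "r1' > 0"
    "\<And>v. norm v \<le> N1 v" "\<And>v. N1 v \<le> B1 * norm v" "\<And>u v. N1 (u + v) \<le> N1 u + N1 v"
    "\<And>x y l. norm (x - Xm) < r1' \<Longrightarrow> norm (y - Xm) < r1' \<Longrightarrow> norm (l - lm) < r1' \<Longrightarrow>
        N1 (f (x, l) - f (y, l)) \<le> d1 * N1 (x - y)"
    using local_contraction[OF assms(1) srm] by blast
  define \<epsilon>1 where "\<epsilon>1 = min (r1' / 2) (\<theta>0 / 2)"
  have \<epsilon>1: "0 < \<epsilon>1" "\<epsilon>1 < r1'" "\<epsilon>1 < \<theta>0" using l1 \<theta>0 by (auto simp: \<epsilon>1_def)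
  obtain \<delta>1 where \<delta>1: "\<delta>1 > 0" "\<delta>1 \<le> r1'"
    "\<And>x l. N1 (x - Xm) \<le> \<epsilon>1 \<Longrightarrow> norm (l - lm) < \<delta>1 \<Longrightarrow> N1 (f (x, l) - Xm) \<le> \<epsilon>1"
    using invariance[OF cont fXm l1(1,2,3,5,6,7,8) \<epsilon>1(1,2)] by blast
  have "\<forall>\<^sub>F s in at_bot. dist (\<Lambda> s) lm < \<delta>1" using \<Lambda>m \<delta>1(1) tendsto_iff by blast
  then obtain S1 where S1: "\<And>s. s \<le> S1 \<Longrightarrow> norm (\<Lambda> s - lm) < \<delta>1"
    by (auto simp: eventually_at_bot_linorder dist_norm)
  define \<delta>' where "\<delta>' = min \<eta> (min \<delta>2 \<theta>1)"
  have \<delta>': "\<delta>' > 0" using \<eta> \<delta>2 \<theta>1 by (simp add: \<delta>'_def)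
  have "\<forall>\<^sub>F s in at_top. dist (\<Lambda> s) lp < \<delta>'" using \<Lambda>p \<delta>' tendsto_iff by blast
  then obtain S2 where S2: "\<And>s. s \<ge> S2 \<Longrightarrow> norm (\<Lambda> s - lp) < \<delta>'"
    by (auto simp: eventually_at_top_linorder dist_norm)
  define r1 where "r1 = max 1 (max (- S1) S2)"
  show ?thesis
  proof (intro exI[of _ r1] conjI allI impI)
    show "r1 > 0" by (simp add: r1_def)
    fix r :: real and x :: "int \<Rightarrow> 'a"
    assume r: "r > r1" and hx: "(\<forall>n. x (n + 1) = f (x n, \<Lambda> (r * of_int n))) \<and> (x \<longlongrightarrow> Xm) at_bot"
    have rec: "\<And>n. x (n + 1) = f (x n, \<Lambda> (r * of_int n))" and xlim: "(x \<longlongrightarrow> Xm) at_bot"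
      using hx by auto
    have rpos: "r > 0" using r by (simp add: r1_def)
    have negpar: "norm (\<Lambda> (r * of_int n) - lm) < \<delta>1" if "n \<le> -1" for n :: int
    proof -
      have "r * of_int n \<le> r * (-1)" using that rpos by (intro mult_left_mono) auto
      then have "r * of_int n \<le> S1" using r by (simp add: r1_def)
      then show ?thesis by (rule S1)
    qed
    have pospar: "norm (\<Lambda> (r * s) - lp) < \<delta>'" if "s \<ge> 1" for s :: real
    proof -
      have "r * 1 \<le> r * s" using that rpos by (intro mult_left_mono) auto
      moreover have "S2 < r" using r by (simp add: r1_def)
      ultimately have "r * s \<ge> S2" by simp
      then show ?thesis by (rule S2)
    qed
    have q1: "\<epsilon>1 / B1 > 0" using \<epsilon>1 l1 by simp
    have "\<forall>\<^sub>F n in at_bot. dist (x n) Xm < \<epsilon>1 / B1" using xlim q1 tendsto_iff by blast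
    then obtain m0 where m0: "\<And>n. n \<le> m0 \<Longrightarrow> norm (x n - Xm) < \<epsilon>1 / B1"
      by (auto simp: eventually_at_bot_linorder dist_norm)
    define m where "m = min m0 0"
    have bck: "m + int k \<le> 0 \<longrightarrow> N1 (x (m + int k) - Xm) \<le> \<epsilon>1" for k
    proof (induction k)
      case 0
      have "norm (x m - Xm) < \<epsilon>1 / B1" using m0 by (simp add: m_def)
      then have "B1 * norm (x m - Xm) \<le> \<epsilon>1" using l1(3) by (simp add: field_simps)
      then show ?case using l1(6)[of "x m - Xm"] by simp
    next
      case (Suc k)
      show ?case
      proof
        assume h: "m + int (Suc k) \<le> 0"
        then have h1: "m + int k \<le> -1" by simp
        have "N1 (x (m + int k) - Xm) \<le> \<epsilon>1" using Suc h1 by simp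
        moreover have "x (m + int (Suc k)) = f (x (m + int k), \<Lambda> (r * of_int (m + int k)))"
        proof -
          have e: "m + int (Suc k) = (m + int k) + 1" by simp
          show ?thesis unfolding e by (rule rec)
        qed
        ultimately show "N1 (x (m + int (Suc k)) - Xm) \<le> \<epsilon>1"
          using \<delta>1(3) negpar[OF h1] by simp
      qed
    qed
    have "N1 (x 0 - Xm) \<le> \<epsilon>1" using bck[of "nat (- m)"] by (simp add: m_def)
    then have x0: "norm (x 0 - Xm) < \<theta>0" using l1(5)[of "x 0 - Xm"] \<epsilon>1 by linarith
    have x1: "norm (x 1 - Z1) < \<theta>1"
      using rec[of 0] \<theta>0(2)[OF x0, of "\<Lambda> 0"] \<theta>0(1) by simp
    have "norm (\<Lambda> r - lp) < \<delta>'" using pospar[of 1] by simp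
    then have "norm (\<Lambda> r - lp) < \<theta>1" by (simp add: \<delta>'_def)
    then have x2: "norm (x 2 - Z2) < \<eta>"
      using rec[of 1] \<theta>1(2)[OF x1] by simp
    define y where "y k = x (2 + int k)" for k
    define \<mu> where "\<mu> k = \<Lambda> (r * (2 + real k))" for k
    have yrec: "y (Suc k) = f (y k, \<mu> k)" for k
      using rec[of "2 + int k"] by (simp add: y_def \<mu>_def add.assoc)
    have \<mu>b: "norm (\<mu> k - lp) < \<delta>'" for k unfolding \<mu>_def by (rule pospar) simp
    have ytraj: "traj f (y 0) \<mu> k = y k" for k by (induction k) (simp_all add: yrec)
    have "norm (traj f (y 0) \<mu> K - (g^^K) Z2) < \<epsilon>2 / (2 * B2)"
      using x2 \<mu>b by (intro \<eta>(2)) (auto simp: y_def \<delta>'_def)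
    then have yK: "norm (y K - (g^^K) Z2) < \<epsilon>2 / (2 * B2)" by (simp add: ytraj)
    have "N2 (y K - Yp) \<le> N2 (y K - (g^^K) Z2) + N2 ((g^^K) Z2 - Yp)"
      using l2(7)[of "y K - (g^^K) Z2" "(g^^K) Z2 - Yp"] by simp
    also have "\<dots> \<le> B2 * (\<epsilon>2 / (2 * B2)) + B2 * (\<epsilon>2 / (2 * B2))"
      using l2(6)[of "y K - (g^^K) Z2"] l2(6)[of "(g^^K) Z2 - Yp"] yK K l2(3)
      by (smt (verit) mult_left_mono)
    also have "\<dots> = \<epsilon>2" using l2(3) by (simp add: field_simps)
    finally have yK2: "N2 (y K - Yp) \<le> \<epsilon>2" .
    define z where "z k = y (K + k)" for k
    define \<mu>' where "\<mu>' k = \<Lambda> (r * ((2 + real K) + real k))" for k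
    have zrec: "z (Suc k) = f (z k, \<mu>' k)" for k
      using yrec[of "K + k"] by (simp add: z_def \<mu>'_def \<mu>_def algebra_simps)
    have \<mu>'b: "norm (\<mu>' k - lp) < \<delta>2" for k
      using \<mu>b[of "K + k"] by (simp add: \<mu>'_def \<mu>_def \<delta>'_def algebra_simps)
    have "filterlim (\<lambda>k. (2 + real K) + real k) at_top sequentially"
      by (intro filterlim_tendsto_add_at_top[OF tendsto_const] filterlim_real_sequentially)
    then have "filterlim (\<lambda>k. r * ((2 + real K) + real k)) at_top sequentially"
      using rpos by (intro filterlim_tendsto_pos_mult_at_top[OF tendsto_const]) auto
    then have \<mu>'lim: "\<mu>' \<longlonglongrightarrow> lp" unfolding \<mu>'_def by (rule filterlim_compose[OF \<Lambda>p])
    have z0: "N2 (z 0 - Yp) \<le> \<epsilon>2" using yK2 by (simp add: z_def)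
    have zlim: "z \<longlonglongrightarrow> Yp"
      by (rule forward_conv[OF cont fYp l2(1,2,3,5,6,7,8) \<epsilon>2 \<delta>2(2,3) zrec \<mu>'lim \<mu>'b z0])
    show "(x \<longlongrightarrow> Yp) at_top"
    proof (unfold tendsto_iff, intro allI impI)
      fix e :: real assume e: "e > 0"
      from LIMSEQ_D[OF zlim e] obtain M where M: "\<And>k. k \<ge> M \<Longrightarrow> norm (z k - Yp) < e" by auto
      show "\<forall>\<^sub>F n in at_top. dist (x n) Yp < e"
        unfolding eventually_at_top_linorder
      proof (intro exI[of _ "2 + int K + int M"] allI impI)
        fix n :: int assume n: "n \<ge> 2 + int K + int M"
        define k where "k = nat (n - 2 - int K)"
        have "k \<ge> M" using n by (simp add: k_def)
        moreover have "z k = x n" using n by (simp add: z_def y_def k_def)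
        ultimately show "dist (x n) Yp < e" using M by (metis dist_norm)
      qed
    qed
  qed
qed

end
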